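(* Let $\mathcal C$ be a category with a class of cofibrations and a class of fibrations such that every map from a cofibrant object to a fibrant object factors both as a cofibration followed by an acyclic fibration and as an acyclic cofibration followed by a fibration. The following conditions are equivalent: (i) for any bifibrant object $A$ and any factorization $\mathrm{Id}_A\colon A\hookrightarrow B\to A$ of the identity as a cofibration followed by an acyclic fibration, the cofibration is acyclic; (ii) there is a class $\mathcal F$ of acyclic fibrations such that any map from a cofibrant object to a fibrant object factors as a cofibration followed by a map in $\mathcal F$, and condition (i) holds for those factorizations whose acyclic fibration part is in $\mathcal F$; (iii) any cofibration $A\hookrightarrow B$ with $A$ cofibrant and $B$ fibrant admits a relative cylinder object; (iv) any cofibration $A\hookrightarrow B$ between bifibrant objects admits a relative cylinder object.
   Context: A class of cofibrations: a class of maps with a cofibrant initial object $0$ ($X$ cofibrant iff $0\to X$ is a cofibration), containing isomorphisms with cofibrant domain, closed under composition, and such that pushouts of a cofibration $A\to B$ along $A\to C$ with $A,C$ cofibrant exist and $C\to C\sqcup_AB$ is a cofibration; a class of fibrations is the dual notion (fibrant objects dually). Bifibrant = fibrant and cofibrant. Acyclic fibration: fibration with the right lifting property against all cofibrations between cofibrant objects; acyclic cofibration: cofibration with the left lifting property against all fibrations between fibrant objects. A relative (strong) cylinder object for a cofibration $A\to B$ is a factorization $B\sqcup_AB\to I_AB\to B$ of the codiagonal whose first map is a cofibration and whose restriction along the first inclusion $B\to B\sqcup_AB$ is an acyclic cofibration. *)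

theory Defs
  imports Main
begin

record ('o, 'a) cat =
  Ob   :: "'o set"
  Ar   :: "'a set"
  Dom  :: "'a \<Rightarrow> 'o"
  Cod  :: "'a \<Rightarrow> 'o"
  Idn  :: "'o \<Rightarrow> 'a"
  Comp :: "'a \<Rightarrow> 'a \<Rightarrow> 'a"   (* Comp C g f = g \<circ> f *)

definition hom :: "('o,'a) cat \<Rightarrow> 'a \<Rightarrow> 'o \<Rightarrow> 'o \<Rightarrow> bool" where
  "hom C f X Y \<longleftrightarrow> f \<in> Ar C \<and> Dom C f = X \<and> Cod C f = Y"

definition is_category :: "('o,'a) cat \<Rightarrow> bool" where
  "is_category C \<longleftrightarrow>
     (\<forall>f\<in>Ar C. Dom C f \<in> Ob C \<and> Cod C f \<in> Ob C) \<and>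
     (\<forall>X\<in>Ob C. hom C (Idn C X) X X) \<and>
     (\<forall>f g. f \<in> Ar C \<and> g \<in> Ar C \<and> Cod C f = Dom C g \<longrightarrow>
        hom C (Comp C g f) (Dom C f) (Cod C g)) \<and>
     (\<forall>f\<in>Ar C. Comp C f (Idn C (Dom C f)) = f \<and> Comp C (Idn C (Cod C f)) f = f) \<and>
     (\<forall>f g h. f \<in> Ar C \<and> g \<in> Ar C \<and> h \<in> Ar C \<and> Cod C f = Dom C g \<and> Cod C g = Dom C h \<longrightarrow>
        Comp C h (Comp C g f) = Comp C (Comp C h g) f)"

definition is_iso :: "('o,'a) cat \<Rightarrow> 'a \<Rightarrow> bool" where
  "is_iso C f \<longleftrightarrow> f \<in> Ar C \<and> (\<exists>g. hom C g (Cod C f) (Dom C f) \<and>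
      Comp C g f = Idn C (Dom C f) \<and> Comp C f g = Idn C (Cod C f))"

definition is_initial :: "('o,'a) cat \<Rightarrow> 'o \<Rightarrow> bool" where
  "is_initial C z \<longleftrightarrow> z \<in> Ob C \<and> (\<forall>X\<in>Ob C. \<exists>!f. hom C f z X)"

definition is_terminal :: "('o,'a) cat \<Rightarrow> 'o \<Rightarrow> bool" where
  "is_terminal C t \<longleftrightarrow> t \<in> Ob C \<and> (\<forall>X\<in>Ob C. \<exists>!f. hom C f X t)"

definition is_pushout :: "('o,'a) cat \<Rightarrow> 'a \<Rightarrow> 'a \<Rightarrow> 'a \<Rightarrow> 'a \<Rightarrow> bool" where
  "is_pushout C f g i j \<longleftrightarrow>
     f \<in> Ar C \<and> g \<in> Ar C \<and> Dom C f = Dom C g \<and>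
     hom C i (Cod C g) (Cod C i) \<and> hom C j (Cod C f) (Cod C i) \<and>
     Comp C i g = Comp C j f \<and>
     (\<forall>u v Q. hom C u (Cod C g) Q \<and> hom C v (Cod C f) Q \<and> Comp C u g = Comp C v f \<longrightarrow>
        (\<exists>!w. hom C w (Cod C i) Q \<and> Comp C w i = u \<and> Comp C w j = v))"

definition is_pullback :: "('o,'a) cat \<Rightarrow> 'a \<Rightarrow> 'a \<Rightarrow> 'a \<Rightarrow> 'a \<Rightarrow> bool" where
  "is_pullback C f g i j \<longleftrightarrow>
     f \<in> Ar C \<and> g \<in> Ar C \<and> Cod C f = Cod C g \<and>
     hom C i (Dom C i) (Dom C g) \<and> hom C j (Dom C i) (Dom C f) \<and>
     Comp C g i = Comp C f j \<and>
     (\<forall>u v Q. hom C u Q (Dom C g) \<and> hom C v Q (Dom C f) \<and> Comp C g u = Comp C f v \<longrightarrow>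
        (\<exists>!w. hom C w Q (Dom C i) \<and> Comp C i w = u \<and> Comp C j w = v))"

definition the_from :: "('o,'a) cat \<Rightarrow> 'o \<Rightarrow> 'o \<Rightarrow> 'a" where
  "the_from C z X = (THE f. hom C f z X)"

definition the_to :: "('o,'a) cat \<Rightarrow> 'o \<Rightarrow> 'o \<Rightarrow> 'a" where
  "the_to C t X = (THE f. hom C f X t)"

definition cofibrant :: "('o,'a) cat \<Rightarrow> 'a set \<Rightarrow> 'o \<Rightarrow> 'o \<Rightarrow> bool" where
  "cofibrant C Cof z X \<longleftrightarrow> X \<in> Ob C \<and> the_from C z X \<in> Cof"

definition fibrant :: "('o,'a) cat \<Rightarrow> 'a set \<Rightarrow> 'o \<Rightarrow> 'o \<Rightarrow> bool" where
  "fibrant C Fib t X \<longleftrightarrow> X \<in> Ob C \<and> the_to C t X \<in> Fib"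

definition cofib_class :: "('o,'a) cat \<Rightarrow> 'a set \<Rightarrow> 'o \<Rightarrow> bool" where
  "cofib_class C Cof z \<longleftrightarrow>
     Cof \<subseteq> Ar C \<and> is_initial C z \<and> cofibrant C Cof z z \<and>
     (\<forall>f. is_iso C f \<and> cofibrant C Cof z (Dom C f) \<longrightarrow> f \<in> Cof) \<and>
     (\<forall>f g. f \<in> Cof \<and> g \<in> Cof \<and> Cod C f = Dom C g \<longrightarrow> Comp C g f \<in> Cof) \<and>
     (\<forall>f g. f \<in> Cof \<and> g \<in> Ar C \<and> Dom C g = Dom C f \<and>
        cofibrant C Cof z (Dom C f) \<and> cofibrant C Cof z (Cod C g) \<longrightarrow>
        (\<exists>i j. is_pushout C f g i j \<and> i \<in> Cof))"

definition fib_class :: "('o,'a) cat \<Rightarrow> 'a set \<Rightarrow> 'o \<Rightarrow> bool" where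
  "fib_class C Fib t \<longleftrightarrow>
     Fib \<subseteq> Ar C \<and> is_terminal C t \<and> fibrant C Fib t t \<and>
     (\<forall>f. is_iso C f \<and> fibrant C Fib t (Cod C f) \<longrightarrow> f \<in> Fib) \<and>
     (\<forall>f g. f \<in> Fib \<and> g \<in> Fib \<and> Cod C f = Dom C g \<longrightarrow> Comp C g f \<in> Fib) \<and>
     (\<forall>f g. f \<in> Fib \<and> g \<in> Ar C \<and> Cod C g = Cod C f \<and>
        fibrant C Fib t (Cod C f) \<and> fibrant C Fib t (Dom C g) \<longrightarrow>
        (\<exists>i j. is_pullback C f g i j \<and> i \<in> Fib))"

definition llp :: "('o,'a) cat \<Rightarrow> 'a \<Rightarrow> 'a \<Rightarrow> bool" where
  "llp C i p \<longleftrightarrow>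
     (\<forall>u v. hom C u (Dom C i) (Dom C p) \<and> hom C v (Cod C i) (Cod C p) \<and>
        Comp C p u = Comp C v i \<longrightarrow>
        (\<exists>h. hom C h (Cod C i) (Dom C p) \<and> Comp C h i = u \<and> Comp C p h = v))"

definition acyclic_fib :: "('o,'a) cat \<Rightarrow> 'a set \<Rightarrow> 'a set \<Rightarrow> 'o \<Rightarrow> 'a \<Rightarrow> bool" where
  "acyclic_fib C Cof Fib z p \<longleftrightarrow> p \<in> Fib \<and>
     (\<forall>i\<in>Cof. cofibrant C Cof z (Dom C i) \<and> cofibrant C Cof z (Cod C i) \<longrightarrow> llp C i p)"

definition acyclic_cof :: "('o,'a) cat \<Rightarrow> 'a set \<Rightarrow> 'a set \<Rightarrow> 'o \<Rightarrow> 'a \<Rightarrow> bool" where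
  "acyclic_cof C Cof Fib t i \<longleftrightarrow> i \<in> Cof \<and>
     (\<forall>p\<in>Fib. fibrant C Fib t (Dom C p) \<and> fibrant C Fib t (Cod C p) \<longrightarrow> llp C i p)"

text \<open>Relative cylinder object for a cofibration i : A \<rightarrow> B: a pushout B \<sqcup>_A B with
  inclusions in1, in2, and a factorization B \<sqcup>_A B --c--> I --s--> B of the codiagonal
  (s c in1 = id, s c in2 = id), c a cofibration and c in1 an acyclic cofibration.\<close>
definition has_rel_cylinder :: "('o,'a) cat \<Rightarrow> 'a set \<Rightarrow> 'a set \<Rightarrow> 'o \<Rightarrow> 'a \<Rightarrow> bool" where
  "has_rel_cylinder C Cof Fib t i \<longleftrightarrow>
     (\<exists>in1 in2 c s. is_pushout C i i in1 in2 \<and>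
        c \<in> Cof \<and> Dom C c = Cod C in1 \<and> hom C s (Cod C c) (Cod C i) \<and>
        Comp C s (Comp C c in1) = Idn C (Cod C i) \<and>
        Comp C s (Comp C c in2) = Idn C (Cod C i) \<and>
        acyclic_cof C Cof Fib t (Comp C c in1))"

end

theory Submission
  imports Defs
begin

locale mc =
  fixes C :: "('o,'a) cat" and Cof Fib :: "'a set" and z t :: 'o
  assumes cat: "is_category C" and cof: "cofib_class C Cof z" and fib: "fib_class C Fib t"
begin

lemma dom_ob: "f \<in> Ar C \<Longrightarrow> Dom C f \<in> Ob C" using cat unfolding is_category_def by blast
lemma cod_ob: "f \<in> Ar C \<Longrightarrow> Cod C f \<in> Ob C" using cat unfolding is_category_def by blast
lemma idn_ar: "X \<in> Ob C \<Longrightarrow> Idn C X \<in> Ar C" using cat unfolding is_category_def hom_def by blast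
lemma idn_dom[simp]: "X \<in> Ob C \<Longrightarrow> Dom C (Idn C X) = X" using cat unfolding is_category_def hom_def by blast
lemma idn_cod[simp]: "X \<in> Ob C \<Longrightarrow> Cod C (Idn C X) = X" using cat unfolding is_category_def hom_def by blast
lemma comp_ar: "f \<in> Ar C \<Longrightarrow> g \<in> Ar C \<Longrightarrow> Cod C f = Dom C g \<Longrightarrow> Comp C g f \<in> Ar C"
  using cat unfolding is_category_def hom_def by blast
lemma comp_dom[simp]: "f \<in> Ar C \<Longrightarrow> g \<in> Ar C \<Longrightarrow> Cod C f = Dom C g \<Longrightarrow> Dom C (Comp C g f) = Dom C f"
  using cat unfolding is_category_def hom_def by blast
lemma comp_cod[simp]: "f \<in> Ar C \<Longrightarrow> g \<in> Ar C \<Longrightarrow> Cod C f = Dom C g \<Longrightarrow> Cod C (Comp C g f) = Cod C g"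
  using cat unfolding is_category_def hom_def by blast
lemma comp_idr: "f \<in> Ar C \<Longrightarrow> Comp C f (Idn C (Dom C f)) = f" using cat unfolding is_category_def by blast
lemma comp_idl: "f \<in> Ar C \<Longrightarrow> Comp C (Idn C (Cod C f)) f = f" using cat unfolding is_category_def by blast
lemma assoc: "f \<in> Ar C \<Longrightarrow> g \<in> Ar C \<Longrightarrow> h \<in> Ar C \<Longrightarrow> Cod C f = Dom C g \<Longrightarrow> Cod C g = Dom C h \<Longrightarrow>
   Comp C h (Comp C g f) = Comp C (Comp C h g) f" using cat unfolding is_category_def by blast

lemma cof_ar: "i \<in> Cof \<Longrightarrow> i \<in> Ar C" using cof unfolding cofib_class_def by blast
lemma fib_ar: "p \<in> Fib \<Longrightarrow> p \<in> Ar C" using fib unfolding fib_class_def by blast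
lemma cof_comp: "f \<in> Cof \<Longrightarrow> g \<in> Cof \<Longrightarrow> Cod C f = Dom C g \<Longrightarrow> Comp C g f \<in> Cof"
  using cof unfolding cofib_class_def by blast
lemma fib_comp: "f \<in> Fib \<Longrightarrow> g \<in> Fib \<Longrightarrow> Cod C f = Dom C g \<Longrightarrow> Comp C g f \<in> Fib"
  using fib unfolding fib_class_def by blast
lemma cof_iso: "is_iso C f \<Longrightarrow> cofibrant C Cof z (Dom C f) \<Longrightarrow> f \<in> Cof"
  using cof unfolding cofib_class_def by blast
lemma z_init: "is_initial C z" using cof unfolding cofib_class_def by blast
lemma t_term: "is_terminal C t" using fib unfolding fib_class_def by blast

lemma from_hom: "X \<in> Ob C \<Longrightarrow> hom C (the_from C z X) z X"
proof -
  assume X: "X \<in> Ob C"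
  then have "\<exists>!f. hom C f z X" using z_init unfolding is_initial_def by blast
  then show ?thesis unfolding the_from_def by (rule theI')
qed
lemma from_uniq: "hom C f z X \<Longrightarrow> f = the_from C z X"
proof -
  assume h: "hom C f z X"
  then have X: "X \<in> Ob C" unfolding hom_def using cod_ob by blast
  then have "\<exists>!f. hom C f z X" using z_init unfolding is_initial_def by blast
  then show ?thesis using h from_hom[OF X] by blast
qed
lemma to_hom: "X \<in> Ob C \<Longrightarrow> hom C (the_to C t X) X t"
proof -
  assume X: "X \<in> Ob C"
  then have "\<exists>!f. hom C f X t" using t_term unfolding is_terminal_def by blast
  then show ?thesis unfolding the_to_def by (rule theI')
qed
lemma to_uniq: "hom C f X t \<Longrightarrow> f = the_to C t X"
proof -
  assume h: "hom C f X t"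
  then have X: "X \<in> Ob C" unfolding hom_def using dom_ob by blast
  then have "\<exists>!f. hom C f X t" using t_term unfolding is_terminal_def by blast
  then show ?thesis using h to_hom[OF X] by blast
qed

lemma cofibrant_cod: assumes i: "i \<in> Cof" and A: "cofibrant C Cof z (Dom C i)"
  shows "cofibrant C Cof z (Cod C i)"
proof -
  have iA: "i \<in> Ar C" using cof_ar i by blast
  have h: "hom C (the_from C z (Dom C i)) z (Dom C i)" using from_hom dom_ob iA by blast
  have hA: "the_from C z (Dom C i) \<in> Ar C" "Dom C (the_from C z (Dom C i)) = z" "Cod C (the_from C z (Dom C i)) = Dom C i"
    using h unfolding hom_def by auto
  have "hom C (Comp C i (the_from C z (Dom C i))) z (Cod C i)"
    unfolding hom_def using comp_ar[OF hA(1) iA hA(3)] comp_dom[OF hA(1) iA hA(3)] comp_cod[OF hA(1) iA hA(3)] hA(2) by simp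
  then have e: "Comp C i (the_from C z (Dom C i)) = the_from C z (Cod C i)" by (rule from_uniq)
  have "Comp C i (the_from C z (Dom C i)) \<in> Cof"
    using cof_comp[OF _ i hA(3)] A unfolding cofibrant_def by blast
  then show ?thesis using e cod_ob[OF iA] unfolding cofibrant_def by simp
qed

lemma fibrant_dom: assumes p: "p \<in> Fib" and A: "fibrant C Fib t (Cod C p)"
  shows "fibrant C Fib t (Dom C p)"
proof -
  have pA: "p \<in> Ar C" using fib_ar p by blast
  have h: "hom C (the_to C t (Cod C p)) (Cod C p) t" using to_hom cod_ob pA by blast
  have hA: "the_to C t (Cod C p) \<in> Ar C" "Dom C (the_to C t (Cod C p)) = Cod C p" "Cod C (the_to C t (Cod C p)) = t"
    using h unfolding hom_def by auto
  have "hom C (Comp C (the_to C t (Cod C p)) p) (Dom C p) t"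
    unfolding hom_def using comp_ar[OF pA hA(1) hA(2)[symmetric]] comp_dom[OF pA hA(1) hA(2)[symmetric]] comp_cod[OF pA hA(1) hA(2)[symmetric]] hA(3) by simp
  then have e: "Comp C (the_to C t (Cod C p)) p = the_to C t (Dom C p)" by (rule to_uniq)
  have "Comp C (the_to C t (Cod C p)) p \<in> Fib"
    using fib_comp[OF p _ hA(2)[symmetric]] A unfolding fibrant_def by blast
  then show ?thesis using e dom_ob[OF pA] unfolding fibrant_def by simp
qed

lemma hom_comp: "hom C f X Y \<Longrightarrow> hom C g Y Z \<Longrightarrow> hom C (Comp C g f) X Z"
  unfolding hom_def using comp_ar comp_dom comp_cod by metis
lemma hom_assoc: "hom C f X Y \<Longrightarrow> hom C g Y Z \<Longrightarrow> hom C h Z W \<Longrightarrow>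
   Comp C h (Comp C g f) = Comp C (Comp C h g) f"
  unfolding hom_def using assoc by metis
lemma hom_id: "X \<in> Ob C \<Longrightarrow> hom C (Idn C X) X X" unfolding hom_def using idn_ar by simp
lemma hom_idr: "hom C f X Y \<Longrightarrow> Comp C f (Idn C X) = f" unfolding hom_def using comp_idr by metis
lemma hom_idl: "hom C f X Y \<Longrightarrow> Comp C (Idn C Y) f = f" unfolding hom_def using comp_idl by metis
lemma hom_ar: "hom C f X Y \<Longrightarrow> f \<in> Ar C" unfolding hom_def by simp
lemma hom_obs: "hom C f X Y \<Longrightarrow> X \<in> Ob C \<and> Y \<in> Ob C" unfolding hom_def using dom_ob cod_ob by metis
lemma ar_hom: "f \<in> Ar C \<Longrightarrow> hom C f (Dom C f) (Cod C f)" unfolding hom_def by simp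

lemma po_facts: assumes "is_pushout C f g i j"
  shows "hom C f (Dom C f) (Cod C f)" "hom C g (Dom C f) (Cod C g)" "hom C i (Cod C g) (Cod C i)"
    "hom C j (Cod C f) (Cod C i)" "Comp C i g = Comp C j f"
  using assms unfolding is_pushout_def hom_def by auto

lemma po_univ: assumes "is_pushout C f g i j" "hom C u (Cod C g) Q" "hom C v (Cod C f) Q"
   "Comp C u g = Comp C v f"
  shows "\<exists>!w. hom C w (Cod C i) Q \<and> Comp C w i = u \<and> Comp C w j = v"
  using assms unfolding is_pushout_def by blast

lemma po_uniq: assumes "is_pushout C f g i j" "hom C w1 (Cod C i) Q" "hom C w2 (Cod C i) Q"
   "Comp C w1 i = Comp C w2 i" "Comp C w1 j = Comp C w2 j"
  shows "w1 = w2"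
proof -
  note F = po_facts[OF assms(1)]
  have "Comp C (Comp C w1 i) g = Comp C (Comp C w1 j) f"
    using hom_assoc[OF F(2) F(3) assms(2)] hom_assoc[OF F(1) F(4) assms(2)] F(5) by metis
  then have "\<exists>!w. hom C w (Cod C i) Q \<and> Comp C w i = Comp C w1 i \<and> Comp C w j = Comp C w1 j"
    using po_univ[OF assms(1) hom_comp[OF F(3) assms(2)] hom_comp[OF F(4) assms(2)]] by blast
  then show ?thesis using assms by metis
qed

lemma po_iso: assumes P1: "is_pushout C f g i j" and P2: "is_pushout C f g i' j'"
  shows "\<exists>w. hom C w (Cod C i') (Cod C i) \<and> is_iso C w \<and> Comp C w i' = i \<and> Comp C w j' = j"
proof -
  note F = po_facts[OF P1] and F' = po_facts[OF P2]
  obtain w where w: "hom C w (Cod C i') (Cod C i)" "Comp C w i' = i" "Comp C w j' = j"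
    using po_univ[OF P2 F(3) F(4) F(5)] by blast
  obtain w' where w': "hom C w' (Cod C i) (Cod C i')" "Comp C w' i = i'" "Comp C w' j = j'"
    using po_univ[OF P1 F'(3) F'(4) F'(5)] by blast
  have o1: "Cod C i \<in> Ob C" "Cod C i' \<in> Ob C" using hom_obs[OF w(1)] by auto
  have a: "Comp C w' w = Idn C (Cod C i')"
  proof (rule po_uniq[OF P2 hom_comp[OF w(1) w'(1)] hom_id[OF o1(2)]])
    show "Comp C (Comp C w' w) i' = Comp C (Idn C (Cod C i')) i'"
      using hom_assoc[OF F'(3) w(1) w'(1)] w w' hom_idl[OF F'(3)] by metis
    show "Comp C (Comp C w' w) j' = Comp C (Idn C (Cod C i')) j'"
      using hom_assoc[OF F'(4) w(1) w'(1)] w w' hom_idl[OF F'(4)] by metis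
  qed
  have b: "Comp C w w' = Idn C (Cod C i)"
  proof (rule po_uniq[OF P1 hom_comp[OF w'(1) w(1)] hom_id[OF o1(1)]])
    show "Comp C (Comp C w w') i = Comp C (Idn C (Cod C i)) i"
      using hom_assoc[OF F(3) w'(1) w(1)] w w' hom_idl[OF F(3)] by metis
    show "Comp C (Comp C w w') j = Comp C (Idn C (Cod C i)) j"
      using hom_assoc[OF F(4) w'(1) w(1)] w w' hom_idl[OF F(4)] by metis
  qed
  have "is_iso C w" unfolding is_iso_def
    using w(1) w'(1) a b unfolding hom_def by auto
  then show ?thesis using w by blast
qed

lemma po_cofibrant: assumes P: "is_pushout C i i in1 in2" and i: "i \<in> Cof"
  and A: "cofibrant C Cof z (Dom C i)"
  shows "cofibrant C Cof z (Cod C in1)"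
proof -
  have B: "cofibrant C Cof z (Cod C i)" using cofibrant_cod[OF i A] .
  have iA: "i \<in> Ar C" using cof_ar[OF i] .
  have "\<exists>i1 j1. is_pushout C i i i1 j1 \<and> i1 \<in> Cof"
    using cof iA i A B unfolding cofib_class_def by blast
  then obtain i1 j1 where P1: "is_pushout C i i i1 j1" and i1: "i1 \<in> Cof" by blast
  have Di1: "Dom C i1 = Cod C i" using po_facts(3)[OF P1] unfolding hom_def by simp
  have c1: "cofibrant C Cof z (Cod C i1)" using cofibrant_cod[OF i1] B Di1 by simp
  obtain w where w: "hom C w (Cod C i1) (Cod C in1)" "is_iso C w"
    using po_iso[OF P P1] by blast
  have "w \<in> Cof" using cof_iso[OF w(2)] c1 w(1) unfolding hom_def by simp
  then show ?thesis using cofibrant_cod[of w] c1 w(1) unfolding hom_def by simp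
qed

lemma cyl_from_factor:
  assumes Facyc: "\<forall>p\<in>F. acyclic_fib C Cof Fib z p"
  and fact: "\<forall>f\<in>Ar C. cofibrant C Cof z (Dom C f) \<and> fibrant C Fib t (Cod C f) \<longrightarrow>
            (\<exists>i p. i \<in> Cof \<and> p \<in> F \<and> Cod C i = Dom C p \<and> f = Comp C p i)"
  and condF: "\<forall>A i p. cofibrant C Cof z A \<and> fibrant C Fib t A \<and> i \<in> Cof \<and> p \<in> F \<and>
            Dom C i = A \<and> Cod C i = Dom C p \<and> Cod C p = A \<and> Comp C p i = Idn C A \<longrightarrow>
            acyclic_cof C Cof Fib t i"
  and i: "i \<in> Cof" and A: "cofibrant C Cof z (Dom C i)" and B: "fibrant C Fib t (Cod C i)"
  shows "has_rel_cylinder C Cof Fib t i"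
proof -
  have Bc: "cofibrant C Cof z (Cod C i)" using cofibrant_cod[OF i A] .
  have iA: "i \<in> Ar C" using cof_ar[OF i] .
  have "\<exists>i1 j1. is_pushout C i i i1 j1 \<and> i1 \<in> Cof"
    using cof iA i A Bc unfolding cofib_class_def by blast
  then obtain i1 j1 where P: "is_pushout C i i i1 j1" and i1: "i1 \<in> Cof" by blast
  note PF = po_facts[OF P]
  have BO: "Cod C i \<in> Ob C" using hom_obs[OF PF(1)] by simp
  have Pc: "cofibrant C Cof z (Cod C i1)" using po_cofibrant[OF P i A] .
  obtain nab where nab: "hom C nab (Cod C i1) (Cod C i)" "Comp C nab i1 = Idn C (Cod C i)"
      "Comp C nab j1 = Idn C (Cod C i)"
    using po_univ[OF P hom_id[OF BO] hom_id[OF BO]] by blast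
  have "\<exists>c q. c \<in> Cof \<and> q \<in> F \<and> Cod C c = Dom C q \<and> nab = Comp C q c"
  proof -
    have "cofibrant C Cof z (Dom C nab) \<and> fibrant C Fib t (Cod C nab)"
      using nab(1) Pc B unfolding hom_def by simp
    then show ?thesis using fact hom_ar[OF nab(1)] by blast
  qed
  then obtain c q where c: "c \<in> Cof" and q: "q \<in> F" and cq: "Cod C c = Dom C q" and
      nq: "nab = Comp C q c" by blast
  have cA: "c \<in> Ar C" using cof_ar[OF c] .
  have qA: "q \<in> Ar C" using fib_ar Facyc q unfolding acyclic_fib_def by blast
  have Dc: "Dom C c = Cod C i1" using nab(1) nq comp_dom[OF cA qA cq] unfolding hom_def by simp
  have Cq: "Cod C q = Cod C i" using nab(1) nq comp_cod[OF cA qA cq] unfolding hom_def by simp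
  have hc: "hom C c (Cod C i1) (Dom C q)" using cA Dc cq unfolding hom_def by simp
  have hq: "hom C q (Dom C q) (Cod C i)" using qA Cq unfolding hom_def by simp
  have s1: "Comp C q (Comp C c i1) = Idn C (Cod C i)"
    using hom_assoc[OF PF(3) hc hq] nq nab(2) by simp
  have s2: "Comp C q (Comp C c j1) = Idn C (Cod C i)"
    using hom_assoc[OF PF(4) hc hq] nq nab(3) by simp
  have ci1: "Comp C c i1 \<in> Cof" using cof_comp[OF i1 c] Dc by simp
  have hci1: "hom C (Comp C c i1) (Cod C i) (Dom C q)" using hom_comp[OF PF(3) hc] .
  have "acyclic_cof C Cof Fib t (Comp C c i1)"
    using condF Bc B ci1 q hci1 Cq s1 unfolding hom_def by blast
  then show ?thesis unfolding has_rel_cylinder_def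
    using P c Dc hq Cq s1 s2 by (intro exI[of _ i1] exI[of _ j1] exI[of _ c] exI[of _ q]) (simp add: cq)
qed

lemma cyl_imp_acyclic:
  assumes cyl: "has_rel_cylinder C Cof Fib t i" and i: "i \<in> Cof"
  and A: "cofibrant C Cof z (Dom C i)" and p: "acyclic_fib C Cof Fib z p"
  and ip: "Cod C i = Dom C p" and pc: "Cod C p = Dom C i" and pi: "Comp C p i = Idn C (Dom C i)"
  shows "acyclic_cof C Cof Fib t i"
proof -
  obtain in1 in2 c s where P: "is_pushout C i i in1 in2" and c: "c \<in> Cof" and
    Dc: "Dom C c = Cod C in1" and hs: "hom C s (Cod C c) (Cod C i)" and
    s1: "Comp C s (Comp C c in1) = Idn C (Cod C i)" and
    s2: "Comp C s (Comp C c in2) = Idn C (Cod C i)" and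
    ac: "acyclic_cof C Cof Fib t (Comp C c in1)"
    using cyl unfolding has_rel_cylinder_def by blast
  note PF = po_facts[OF P]
  have pF: "p \<in> Fib" using p unfolding acyclic_fib_def by blast
  have hp: "hom C p (Cod C i) (Dom C i)" using fib_ar[OF pF] ip pc unfolding hom_def by simp
  have hi: "hom C i (Dom C i) (Cod C i)" using PF(1) .
  have hc: "hom C c (Cod C in1) (Cod C c)" using cof_ar[OF c] Dc unfolding hom_def by simp
  have AO: "Dom C i \<in> Ob C" and BO: "Cod C i \<in> Ob C" using hom_obs[OF hi] by auto
  have hip: "hom C (Comp C i p) (Cod C i) (Cod C i)" using hom_comp[OF hp hi] .
  have ipi: "Comp C (Comp C i p) i = i"
    using hom_assoc[OF hi hp hi] pi hom_idr[OF hi] by simp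
  obtain w where w: "hom C w (Cod C in1) (Cod C i)" "Comp C w in1 = Comp C i p" "Comp C w in2 = Idn C (Cod C i)"
  proof -
    have "Comp C (Comp C i p) i = Comp C (Idn C (Cod C i)) i" using ipi hom_idl[OF hi] by simp
    from ex1_implies_ex[OF po_univ[OF P hip hom_id[OF BO] this]] show ?thesis using that by blast
  qed
  have hps: "hom C (Comp C p s) (Cod C c) (Dom C i)" using hom_comp[OF hs hp] .
  have Pcof: "cofibrant C Cof z (Cod C in1)" using po_cofibrant[OF P i A] .
  have Icof: "cofibrant C Cof z (Cod C c)" using cofibrant_cod[OF c] Pcof Dc by simp
  have sq: "Comp C p w = Comp C (Comp C p s) c"
  proof (rule po_uniq[OF P hom_comp[OF w(1) hp] hom_comp[OF hc hps]])
    show "Comp C (Comp C p w) in1 = Comp C (Comp C (Comp C p s) c) in1"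
    proof -
      have "Comp C (Comp C p w) in1 = Comp C p (Comp C i p)"
        using hom_assoc[OF PF(3) w(1) hp] w(2) by simp
      also have "... = p" using hom_assoc[OF hp hi hp] pi hom_idl[OF hp] by simp
      also have "... = Comp C (Comp C p s) (Comp C c in1)"
        using hom_assoc[OF hom_comp[OF PF(3) hc] hs hp] s1 hom_idr[OF hp] by simp
      also have "... = Comp C (Comp C (Comp C p s) c) in1"
        using hom_assoc[OF PF(3) hc hps] by simp
      finally show ?thesis .
    qed
    show "Comp C (Comp C p w) in2 = Comp C (Comp C (Comp C p s) c) in2"
    proof -
      have "Comp C (Comp C p w) in2 = p"
        using hom_assoc[OF PF(4) w(1) hp] w(3) hom_idr[OF hp] by simp
      also have "... = Comp C (Comp C p s) (Comp C c in2)"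
        using hom_assoc[OF hom_comp[OF PF(4) hc] hs hp] s2 hom_idr[OF hp] by simp
      also have "... = Comp C (Comp C (Comp C p s) c) in2"
        using hom_assoc[OF PF(4) hc hps] by simp
      finally show ?thesis .
    qed
  qed
  have "llp C c p" using p c Pcof Icof Dc unfolding acyclic_fib_def by simp
  moreover have "hom C w (Dom C c) (Dom C p) \<and> hom C (Comp C p s) (Cod C c) (Cod C p) \<and> Comp C p w = Comp C (Comp C p s) c"
    using w(1) hps sq Dc ip pc by simp
  ultimately have "\<exists>h. hom C h (Cod C c) (Dom C p) \<and> Comp C h c = w \<and> Comp C p h = Comp C p s"
    unfolding llp_def by blast
  then obtain H where H: "hom C H (Cod C c) (Cod C i)" "Comp C H c = w" "Comp C p H = Comp C p s"
    using ip by auto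
  have Hin1: "Comp C H (Comp C c in1) = Comp C i p" using hom_assoc[OF PF(3) hc H(1)] H(2) w(2) by simp
  have Hin2: "Comp C H (Comp C c in2) = Idn C (Cod C i)" using hom_assoc[OF PF(4) hc H(1)] H(2) w(3) by simp
  have hci1: "hom C (Comp C c in1) (Cod C i) (Cod C c)" using hom_comp[OF PF(3) hc] .
  have hci2: "hom C (Comp C c in2) (Cod C i) (Cod C c)" using hom_comp[OF PF(4) hc] .
  have "llp C i r" if r: "r \<in> Fib" "fibrant C Fib t (Dom C r)" "fibrant C Fib t (Cod C r)" for r
    unfolding llp_def
  proof (intro allI impI)
    fix u v assume uv: "hom C u (Dom C i) (Dom C r) \<and> hom C v (Cod C i) (Cod C r) \<and> Comp C r u = Comp C v i"
    have hu: "hom C u (Dom C i) (Dom C r)" and hv: "hom C v (Cod C i) (Cod C r)" and ruv: "Comp C r u = Comp C v i"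
      using uv by auto
    have hr: "hom C r (Dom C r) (Cod C r)" using ar_hom[OF fib_ar[OF r(1)]] .
    have hup: "hom C (Comp C u p) (Cod C i) (Dom C r)" using hom_comp[OF hp hu] .
    have hvH: "hom C (Comp C v H) (Cod C c) (Cod C r)" using hom_comp[OF H(1) hv] .
    have sq2: "Comp C r (Comp C u p) = Comp C (Comp C v H) (Comp C c in1)"
    proof -
      have "Comp C r (Comp C u p) = Comp C (Comp C v i) p" using hom_assoc[OF hp hu hr] ruv by simp
      also have "... = Comp C v (Comp C i p)" using hom_assoc[OF hp hi hv] by simp
      also have "... = Comp C (Comp C v H) (Comp C c in1)" using hom_assoc[OF hci1 H(1) hv] Hin1 by simp
      finally show ?thesis .
    qed
    have "llp C (Comp C c in1) r" using ac r unfolding acyclic_cof_def by simp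
    moreover have "hom C (Comp C u p) (Dom C (Comp C c in1)) (Dom C r) \<and> hom C (Comp C v H) (Cod C (Comp C c in1)) (Cod C r)
        \<and> Comp C r (Comp C u p) = Comp C (Comp C v H) (Comp C c in1)"
      using hup hvH sq2 hci1 unfolding hom_def by simp
    ultimately have "\<exists>h. hom C h (Cod C (Comp C c in1)) (Dom C r) \<and> Comp C h (Comp C c in1) = Comp C u p \<and> Comp C r h = Comp C v H"
      unfolding llp_def by blast
    then obtain K where K: "hom C K (Cod C c) (Dom C r)" "Comp C K (Comp C c in1) = Comp C u p"
        "Comp C r K = Comp C v H"
      using hci1 unfolding hom_def by auto
    define L where "L = Comp C K (Comp C c in2)"
    have hL: "hom C L (Cod C i) (Dom C r)" unfolding L_def using hom_comp[OF hci2 K(1)] .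
    have "Comp C L i = u"
    proof -
      have "Comp C L i = Comp C K (Comp C (Comp C c in2) i)" unfolding L_def using hom_assoc[OF hi hci2 K(1)] by simp
      also have "... = Comp C K (Comp C c (Comp C in2 i))" using hom_assoc[OF hi PF(4) hc] by simp
      also have "... = Comp C K (Comp C c (Comp C in1 i))" using PF(5) by simp
      also have "... = Comp C K (Comp C (Comp C c in1) i)" using hom_assoc[OF hi PF(3) hc] by simp
      also have "... = Comp C (Comp C u p) i" using hom_assoc[OF hi hci1 K(1)] K(2) by simp
      also have "... = u" using hom_assoc[OF hi hp hu] pi hom_idr[OF hu] by simp
      finally show ?thesis .
    qed
    moreover have "Comp C r L = v"
    proof -
      have "Comp C r L = Comp C (Comp C v H) (Comp C c in2)" unfolding L_def using hom_assoc[OF hci2 K(1) hr] K(3) by simp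
      also have "... = v" using hom_assoc[OF hci2 H(1) hv] Hin2 hom_idr[OF hv] by simp
      finally show ?thesis .
    qed
    ultimately show "\<exists>h. hom C h (Cod C i) (Dom C r) \<and> Comp C h i = u \<and> Comp C r h = v" using hL by blast
  qed
  then show ?thesis unfolding acyclic_cof_def using i by blast
qed

end


theorem proposition2p3p2:
  fixes C :: "('o, 'a) cat" and Cof Fib :: "'a set" and z t :: 'o
  assumes cat: "is_category C"
    and cof: "cofib_class C Cof z"
    and fib: "fib_class C Fib t"
    and fact1: "\<forall>f\<in>Ar C. cofibrant C Cof z (Dom C f) \<and> fibrant C Fib t (Cod C f) \<longrightarrow>
                  (\<exists>i p. i \<in> Cof \<and> acyclic_fib C Cof Fib z p \<and> Cod C i = Dom C p \<and> f = Comp C p i)"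
    and fact2: "\<forall>f\<in>Ar C. cofibrant C Cof z (Dom C f) \<and> fibrant C Fib t (Cod C f) \<longrightarrow>
                  (\<exists>i p. acyclic_cof C Cof Fib t i \<and> p \<in> Fib \<and> Cod C i = Dom C p \<and> f = Comp C p i)"
  defines "cond_i \<equiv>
      (\<forall>A i p. cofibrant C Cof z A \<and> fibrant C Fib t A \<and> i \<in> Cof \<and> acyclic_fib C Cof Fib z p \<and>
         Dom C i = A \<and> Cod C i = Dom C p \<and> Cod C p = A \<and> Comp C p i = Idn C A \<longrightarrow>
         acyclic_cof C Cof Fib t i)"
    and "cond_ii \<equiv>
      (\<exists>F. (\<forall>p\<in>F. acyclic_fib C Cof Fib z p) \<and>
         (\<forall>f\<in>Ar C. cofibrant C Cof z (Dom C f) \<and> fibrant C Fib t (Cod C f) \<longrightarrow>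
            (\<exists>i p. i \<in> Cof \<and> p \<in> F \<and> Cod C i = Dom C p \<and> f = Comp C p i)) \<and>
         (\<forall>A i p. cofibrant C Cof z A \<and> fibrant C Fib t A \<and> i \<in> Cof \<and> p \<in> F \<and>
            Dom C i = A \<and> Cod C i = Dom C p \<and> Cod C p = A \<and> Comp C p i = Idn C A \<longrightarrow>
            acyclic_cof C Cof Fib t i))"
    and "cond_iii \<equiv>
      (\<forall>i\<in>Cof. cofibrant C Cof z (Dom C i) \<and> fibrant C Fib t (Cod C i) \<longrightarrow>
         has_rel_cylinder C Cof Fib t i)"
    and "cond_iv \<equiv>
      (\<forall>i\<in>Cof. cofibrant C Cof z (Dom C i) \<and> fibrant C Fib t (Dom C i) \<and>
         cofibrant C Cof z (Cod C i) \<and> fibrant C Fib t (Cod C i) \<longrightarrow>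
         has_rel_cylinder C Cof Fib t i)"
  shows "(cond_i \<longleftrightarrow> cond_ii) \<and> (cond_i \<longleftrightarrow> cond_iii) \<and> (cond_i \<longleftrightarrow> cond_iv)"
proof -
  interpret mc C Cof Fib z t using cat cof fib by unfold_locales
  have i_ii: "cond_ii" if ci: "cond_i"
  proof -
    have "(\<forall>p\<in>{p. acyclic_fib C Cof Fib z p}. acyclic_fib C Cof Fib z p) \<and>
         (\<forall>f\<in>Ar C. cofibrant C Cof z (Dom C f) \<and> fibrant C Fib t (Cod C f) \<longrightarrow>
            (\<exists>i p. i \<in> Cof \<and> p \<in> {p. acyclic_fib C Cof Fib z p} \<and> Cod C i = Dom C p \<and> f = Comp C p i)) \<and>
         (\<forall>A i p. cofibrant C Cof z A \<and> fibrant C Fib t A \<and> i \<in> Cof \<and> p \<in> {p. acyclic_fib C Cof Fib z p} \<and>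
            Dom C i = A \<and> Cod C i = Dom C p \<and> Cod C p = A \<and> Comp C p i = Idn C A \<longrightarrow>
            acyclic_cof C Cof Fib t i)"
      using fact1 ci unfolding cond_i_def by simp
    then show ?thesis unfolding cond_ii_def by blast
  qed
  have ii_iii: "cond_iii" if cii: "cond_ii"
  proof -
    obtain F where F1: "\<forall>p\<in>F. acyclic_fib C Cof Fib z p" and
      F2: "\<forall>f\<in>Ar C. cofibrant C Cof z (Dom C f) \<and> fibrant C Fib t (Cod C f) \<longrightarrow>
            (\<exists>i p. i \<in> Cof \<and> p \<in> F \<and> Cod C i = Dom C p \<and> f = Comp C p i)" and
      F3: "\<forall>A i p. cofibrant C Cof z A \<and> fibrant C Fib t A \<and> i \<in> Cof \<and> p \<in> F \<and>
            Dom C i = A \<and> Cod C i = Dom C p \<and> Cod C p = A \<and> Comp C p i = Idn C A \<longrightarrow>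
            acyclic_cof C Cof Fib t i"
      using cii unfolding cond_ii_def by blast
    show ?thesis unfolding cond_iii_def using cyl_from_factor[OF F1 F2 F3] by blast
  qed
  have iii_iv: "cond_iv" if "cond_iii" using that unfolding cond_iii_def cond_iv_def by blast
  have iv_i: "cond_i" if civ: "cond_iv"
    unfolding cond_i_def
  proof (intro allI impI)
    fix A i p
    assume h: "cofibrant C Cof z A \<and> fibrant C Fib t A \<and> i \<in> Cof \<and> acyclic_fib C Cof Fib z p \<and>
         Dom C i = A \<and> Cod C i = Dom C p \<and> Cod C p = A \<and> Comp C p i = Idn C A"
    have pF: "p \<in> Fib" using h unfolding acyclic_fib_def by blast
    have c1: "cofibrant C Cof z (Cod C i)" using cofibrant_cod[of i] h by simp
    have f1: "fibrant C Fib t (Cod C i)" using fibrant_dom[OF pF] h by simp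
    have "has_rel_cylinder C Cof Fib t i" using civ c1 f1 h unfolding cond_iv_def by simp
    then show "acyclic_cof C Cof Fib t i" using cyl_imp_acyclic[of i p] h by simp
  qed
  show ?thesis using i_ii ii_iii iii_iv iv_i by blast
qed

end
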